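(* Let $C$ be a normal, closed cone with nonempty interior in a real Banach space. Let $f:\operatorname{int} C\to\operatorname{int} C$ be order-preserving and subhomogeneous, and suppose that $C$ is regular, or $f$ is $\gamma$-condensing, or $f$ is $\tau$-condensing. If $u$ is a fixed point of $f$ and $\operatorname{Fix}(f)$ is bounded in $d_T$, then for any $R>r>0$ with $\operatorname{Fix}(f)\subset B_r(u)$ there is $k\in\mathbb{N}$ such that $f^k(\overline{B_R(u)})\subset B_r(u)$. In particular, if $f$ has a unique fixed point $u\in\operatorname{int}C$, then $f^k(x)\to u$ for all $x\in\operatorname{int} C$.
   Context: A closed cone $C$ (closed convex, $\lambda C\subseteq C$ for $\lambda\ge0$, $C\cap(-C)=\{0\}$) induces the order $x\le y$ iff $y-x\in C$. $C$ is normal if there is $\kappa$ with $\|x\|\le\kappa\|y\|$ whenever $0\le x\le y$; regular if every decreasing sequence in $C$ converges. Thompson's metric on $\operatorname{int}C$: $d_T(x,y)=\log\inf\{\beta\ge1:\beta^{-1}x\le y\le\beta x\}$; $B_R(u)=\{y\in\operatorname{int}C: d_T(u,y)<R\}$, and $\overline{B_R(u)}=[e^{-R}u,e^Ru]=\{z: e^{-R}u\le z\le e^Ru\}$. $f$ is order-preserving if $x\le y\Rightarrow f(x)\le f(y)$; subhomogeneous if $f(tx)\le tf(x)$ for $t\ge1$. $\gamma$ and $\tau$ are Kuratowski's measures of noncompactness for the norm and for $d_T$ respectively ($\inf$ of $d$ such that the set has a finite cover by sets of diameter $\le d$); a continuous map is $\gamma$- (resp. $\tau$-) condensing if it strictly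 decreases $\gamma$ (resp. $\tau$) on every bounded (resp. $d_T$-bounded) set of positive measure. *)

theory Defs
  imports "HOL-Analysis.Analysis"
begin

definition closed_cone :: "'a::real_normed_vector set \<Rightarrow> bool" where
  "closed_cone C \<longleftrightarrow> closed C \<and> convex C \<and>
     (\<forall>x\<in>C. \<forall>c::real. c \<ge> 0 \<longrightarrow> c *\<^sub>R x \<in> C) \<and> C \<inter> uminus ` C = {0}"

definition cone_le :: "'a::real_normed_vector set \<Rightarrow> 'a \<Rightarrow> 'a \<Rightarrow> bool" where
  "cone_le C x y \<longleftrightarrow> y - x \<in> C"

definition normal_cone :: "'a::real_normed_vector set \<Rightarrow> bool" where
  "normal_cone C \<longleftrightarrow> (\<exists>\<kappa>::real. \<forall>x y. cone_le C 0 x \<and> cone_le C x y \<longrightarrow> norm x \<le> \<kappa> * norm y)"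

definition regular_cone :: "'a::real_normed_vector set \<Rightarrow> bool" where
  "regular_cone C \<longleftrightarrow> (\<forall>x::nat \<Rightarrow> 'a. (\<forall>n. x n \<in> C) \<and> (\<forall>n. cone_le C (x (Suc n)) (x n))
        \<longrightarrow> convergent x)"

definition thompson :: "'a::real_normed_vector set \<Rightarrow> 'a \<Rightarrow> 'a \<Rightarrow> real" where
  "thompson C x y = ln (Inf {\<beta>::real. \<beta> \<ge> 1 \<and> cone_le C ((1/\<beta>) *\<^sub>R x) y \<and> cone_le C y (\<beta> *\<^sub>R x)})"

definition thompson_ball :: "'a::real_normed_vector set \<Rightarrow> 'a \<Rightarrow> real \<Rightarrow> 'a set" where
  "thompson_ball C u R = {y \<in> interior C. thompson C u y < R}"

text \<open>The closed Thompson ball, i.e. the order interval [e^{-R}u, e^R u].\<close>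
definition thompson_cball :: "'a::real_normed_vector set \<Rightarrow> 'a \<Rightarrow> real \<Rightarrow> 'a set" where
  "thompson_cball C u R = {z. cone_le C (exp (-R) *\<^sub>R u) z \<and> cone_le C z (exp R *\<^sub>R u)}"

definition thompson_bounded :: "'a::real_normed_vector set \<Rightarrow> 'a set \<Rightarrow> bool" where
  "thompson_bounded C S \<longleftrightarrow> S \<subseteq> interior C \<and> (\<exists>R. \<forall>x\<in>S. \<forall>y\<in>S. thompson C x y \<le> R)"

definition kuratowski :: "('a \<Rightarrow> 'a \<Rightarrow> real) \<Rightarrow> 'a set \<Rightarrow> real" where
  "kuratowski d S = Inf {\<delta>. \<delta> \<ge> 0 \<and> (\<exists>F. finite F \<and> \<Union>F = S \<and>
      (\<forall>A\<in>F. \<forall>x\<in>A. \<forall>y\<in>A. d x y \<le> \<delta>))}"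

definition order_preserving_on :: "'a::real_normed_vector set \<Rightarrow> ('a \<Rightarrow> 'a) \<Rightarrow> bool" where
  "order_preserving_on C f \<longleftrightarrow>
     (\<forall>x\<in>interior C. \<forall>y\<in>interior C. cone_le C x y \<longrightarrow> cone_le C (f x) (f y))"

definition subhomogeneous_on :: "'a::real_normed_vector set \<Rightarrow> ('a \<Rightarrow> 'a) \<Rightarrow> bool" where
  "subhomogeneous_on C f \<longleftrightarrow>
     (\<forall>x\<in>interior C. \<forall>t::real. t \<ge> 1 \<longrightarrow> cone_le C (f (t *\<^sub>R x)) (t *\<^sub>R f x))"

definition gamma_condensing :: "'a::real_normed_vector set \<Rightarrow> ('a \<Rightarrow> 'a) \<Rightarrow> bool" where
  "gamma_condensing C f \<longleftrightarrow> continuous_on (interior C) f \<and>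
     (\<forall>S. S \<subseteq> interior C \<and> bounded S \<and> kuratowski dist S > 0 \<longrightarrow>
        kuratowski dist (f ` S) < kuratowski dist S)"

definition tau_condensing :: "'a::real_normed_vector set \<Rightarrow> ('a \<Rightarrow> 'a) \<Rightarrow> bool" where
  "tau_condensing C f \<longleftrightarrow> continuous_on (interior C) f \<and>
     (\<forall>S. thompson_bounded C S \<and> kuratowski (thompson C) S > 0 \<longrightarrow>
        kuratowski (thompson C) (f ` S) < kuratowski (thompson C) S)"

definition fixpoints :: "'a set \<Rightarrow> ('a \<Rightarrow> 'a) \<Rightarrow> 'a set" where
  "fixpoints D f = {x \<in> D. f x = x}"

end

theory Submission
  imports Defs
begin


locale cctx =
  fixes C :: "'a::banach set"
  assumes cone: "closed_cone C"
begin

abbreviation le where "le x y \<equiv> cone_le C x y"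

lemma closedC: "closed C" and convexC: "convex C"
  and scaleC: "x \<in> C \<Longrightarrow> c \<ge> 0 \<Longrightarrow> c *\<^sub>R x \<in> C"
  and pointed: "C \<inter> uminus ` C = {0}"
  using cone unfolding closed_cone_def by auto

lemma zeroC: "0 \<in> C" using pointed by auto

lemma addC: assumes "x \<in> C" "y \<in> C" shows "x + y \<in> C"
proof -
  have "(1/2) *\<^sub>R x + (1/2) *\<^sub>R y \<in> C"
    using convexD[OF convexC assms] by simp
  from scaleC[OF this, of 2] show ?thesis by (simp add: algebra_simps)
qed

lemma le_refl: "le x x" by (simp add: cone_le_def zeroC)

lemma le_trans: "le x y \<Longrightarrow> le y z \<Longrightarrow> le x z"
  unfolding cone_le_def using addC[of "z - y" "y - x"] by simp

lemma le_antisym: assumes "le x y" "le y x" shows "x = y"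
proof -
  have "y - x \<in> C" "-(y - x) \<in> C" using assms by (auto simp: cone_le_def)
  hence "y - x \<in> C \<inter> uminus ` C" by (metis IntI image_eqI minus_minus)
  thus ?thesis using pointed by auto
qed

lemma le_scale: "le x y \<Longrightarrow> c \<ge> 0 \<Longrightarrow> le (c *\<^sub>R x) (c *\<^sub>R y)"
  unfolding cone_le_def using scaleC[of "y - x" c] by (simp add: algebra_simps)

lemma le_add: "le a b \<Longrightarrow> le c d \<Longrightarrow> le (a + c) (b + d)"
  unfolding cone_le_def using addC[of "b - a" "d - c"] by (simp add: algebra_simps)

lemma le_scalar: "x \<in> C \<Longrightarrow> a \<le> b \<Longrightarrow> le (a *\<^sub>R x) (b *\<^sub>R x)"
  unfolding cone_le_def using scaleC[of x "b - a"] by (simp add: algebra_simps)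

lemma le_0: "le 0 x \<longleftrightarrow> x \<in> C" by (simp add: cone_le_def)

lemma intC: "interior C \<subseteq> C" by (rule interior_subset)

lemma int_le: assumes "x \<in> interior C" "le x y" shows "y \<in> interior C"
proof -
  obtain e where e: "e > 0" "ball x e \<subseteq> C" using assms(1) mem_interior by blast
  have "ball y e \<subseteq> C"
  proof
    fix z assume "z \<in> ball y e"
    hence "z - (y - x) \<in> ball x e" by (simp add: dist_norm algebra_simps)
    hence "z - (y - x) \<in> C" using e by auto
    from addC[OF this, of "y - x"] assms(2) show "z \<in> C" by (simp add: cone_le_def)
  qed
  thus ?thesis using e mem_interior by blast
qed

lemma int_scale: assumes "x \<in> interior C" "c > 0" shows "c *\<^sub>R x \<in> interior C"
proof -
  obtain e where e: "e > 0" "ball x e \<subseteq> C" using assms(1) mem_interior by blast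
  have "ball (c *\<^sub>R x) (c * e) \<subseteq> C"
  proof
    fix z assume "z \<in> ball (c *\<^sub>R x) (c * e)"
    hence "norm (c *\<^sub>R x - z) < c * e" by (simp add: dist_norm)
    hence "norm (c *\<^sub>R (x - (1/c) *\<^sub>R z)) < c * e" using assms(2) by (simp add: algebra_simps)
    hence "c * norm (x - (1/c) *\<^sub>R z) < c * e" using assms(2) by simp
    hence "norm (x - (1/c) *\<^sub>R z) < e" using assms(2) by simp
    hence "(1/c) *\<^sub>R z \<in> C" using e by (auto simp: dist_norm)
    from scaleC[OF this, of c] show "z \<in> C" using assms(2) by simp
  qed
  thus ?thesis using e assms(2) mem_interior by (metis mult_pos_pos)
qed

lemma le_closed:
  assumes "(s \<longlongrightarrow> a) F" "(t \<longlongrightarrow> b) F" "eventually (\<lambda>k. le (s k) (t k)) F" "F \<noteq> bot"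
  shows "le a b"
proof -
  have "((\<lambda>k. t k - s k) \<longlongrightarrow> b - a) F" by (intro tendsto_intros assms)
  moreover have "eventually (\<lambda>k. t k - s k \<in> C) F" using assms(3) by (simp add: cone_le_def)
  ultimately show ?thesis using Lim_in_closed_set[OF closedC] assms(4) by (simp add: cone_le_def)
qed

lemma int_approx:
  assumes "z \<in> interior C" "\<epsilon> > 0"
  shows "\<exists>\<rho>>0. \<forall>w. norm (w - z) < \<rho> \<longrightarrow> le ((1 - \<epsilon>) *\<^sub>R z) w \<and> le w ((1 + \<epsilon>) *\<^sub>R z)"
proof -
  obtain e where e: "e > 0" "ball z e \<subseteq> C" using assms(1) mem_interior by blast
  have "\<forall>w. norm (w - z) < \<epsilon> * e \<longrightarrow> le ((1 - \<epsilon>) *\<^sub>R z) w \<and> le w ((1 + \<epsilon>) *\<^sub>R z)"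
  proof (intro allI impI)
    fix w assume w: "norm (w - z) < \<epsilon> * e"
    have "norm ((1/\<epsilon>) *\<^sub>R (w - z)) = norm (w - z) / \<epsilon>" using assms(2) by simp
    also have "\<dots> < e" using w assms(2) by (simp add: pos_divide_less_eq mult.commute)
    finally have n: "norm ((1/\<epsilon>) *\<^sub>R (w - z)) < e" .
    have "z + (1/\<epsilon>) *\<^sub>R (w - z) \<in> ball z e" using n by (simp add: dist_norm)
    hence 1: "z + (1/\<epsilon>) *\<^sub>R (w - z) \<in> C" using e by auto
    have "z - (1/\<epsilon>) *\<^sub>R (w - z) \<in> ball z e" using n by (simp add: dist_norm)
    hence 2: "z - (1/\<epsilon>) *\<^sub>R (w - z) \<in> C" using e by auto
    have "\<epsilon> *\<^sub>R (z + (1/\<epsilon>) *\<^sub>R (w - z)) = w - (1 - \<epsilon>) *\<^sub>R z"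
      using assms(2) by (simp add: algebra_simps)
    moreover have "\<epsilon> *\<^sub>R (z - (1/\<epsilon>) *\<^sub>R (w - z)) = (1 + \<epsilon>) *\<^sub>R z - w"
      using assms(2) by (simp add: algebra_simps)
    ultimately show "le ((1 - \<epsilon>) *\<^sub>R z) w \<and> le w ((1 + \<epsilon>) *\<^sub>R z)"
      using scaleC[OF 1, of \<epsilon>] scaleC[OF 2, of \<epsilon>] assms(2) by (simp add: cone_le_def)
  qed
  thus ?thesis using e assms(2) by (metis mult_pos_pos)
qed

lemma int_dom:
  assumes "p \<in> interior C"
  shows "\<exists>\<beta>\<ge>1. le q (\<beta> *\<^sub>R p)"
proof -
  obtain e where e: "e > 0" "ball p e \<subseteq> C" using assms(1) mem_interior by blast
  define \<beta> where "\<beta> = 2 * norm q / e + 1"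
  have "0 \<le> 2 * norm q / e" using e by simp
  hence b: "\<beta> \<ge> 1" "\<beta> > 0" unfolding \<beta>_def by linarith+
  have "norm ((1/\<beta>) *\<^sub>R q) < e"
  proof -
    have "norm ((1/\<beta>) *\<^sub>R q) = norm q / \<beta>" using b by simp
    also have "\<dots> < e" using b e unfolding \<beta>_def
      by (simp add: field_simps) (smt (verit) mult_pos_pos norm_ge_zero mult_nonneg_nonneg)
    finally show ?thesis .
  qed
  hence "p - (1/\<beta>) *\<^sub>R q \<in> C" using e by (auto simp: dist_norm)
  from scaleC[OF this, of \<beta>] b have "\<beta> *\<^sub>R p - q \<in> C" by (simp add: algebra_simps)
  thus ?thesis using b by (auto simp: cone_le_def)
qed

definition TB where "TB p q = {\<beta>::real. \<beta> \<ge> 1 \<and> le ((1/\<beta>) *\<^sub>R p) q \<and> le q (\<beta> *\<^sub>R p)}"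

lemma thompson_TB: "thompson C p q = ln (Inf (TB p q))"
  unfolding thompson_def TB_def by simp

lemma TB_ne_bounds:
  assumes "\<beta> \<in> TB p q"
  shows "1 \<le> Inf (TB p q)" "Inf (TB p q) \<le> \<beta>"
proof -
  have bb: "bdd_below (TB p q)" unfolding TB_def by (rule bdd_belowI[of _ 1]) auto
  show "Inf (TB p q) \<le> \<beta>" by (rule cInf_lower[OF assms bb])
  show "1 \<le> Inf (TB p q)" using assms by (intro cInf_greatest) (auto simp: TB_def)
qed

lemma TB_int:
  assumes "p \<in> interior C" "q \<in> interior C"
  shows "TB p q \<noteq> {}"
proof -
  obtain b1 where b1: "b1 \<ge> 1" "le q (b1 *\<^sub>R p)" using int_dom[OF assms(1)] by blast
  obtain b2 where b2: "b2 \<ge> 1" "le p (b2 *\<^sub>R q)" using int_dom[OF assms(2)] by blast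
  define b where "b = max b1 b2"
  have "le (b1 *\<^sub>R p) (b *\<^sub>R p)" unfolding b_def
    by (rule le_scalar) (use assms intC in auto)
  hence 1: "le q (b *\<^sub>R p)" using b1 le_trans by blast
  have "le (b2 *\<^sub>R q) (b *\<^sub>R q)" unfolding b_def
    by (rule le_scalar) (use assms intC in auto)
  hence "le p (b *\<^sub>R q)" using b2 le_trans by blast
  from le_scale[OF this, of "1/b"] have "le ((1/b) *\<^sub>R p) ((1/b) *\<^sub>R (b *\<^sub>R q))"
    using b1 unfolding b_def by simp
  moreover have "b > 0" using b1 unfolding b_def by simp
  hence "(1/b) *\<^sub>R (b *\<^sub>R q) = q" by simp
  ultimately have "le ((1/b) *\<^sub>R p) q" by simp
  with 1 have "b \<in> TB p q" unfolding TB_def b_def using b1 by auto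
  thus ?thesis by auto
qed

lemma thompson_lt:
  assumes "TB p q \<noteq> {}" "thompson C p q < r"
  shows "\<exists>\<beta>. 1 \<le> \<beta> \<and> \<beta> < exp r \<and> le ((1/\<beta>) *\<^sub>R p) q \<and> le q (\<beta> *\<^sub>R p)"
proof -
  obtain b where b: "b \<in> TB p q" using assms(1) by auto
  have i1: "1 \<le> Inf (TB p q)" using TB_ne_bounds[OF b] by simp
  have "Inf (TB p q) < exp r"
  proof -
    have "Inf (TB p q) = exp (ln (Inf (TB p q)))" using i1 by simp
    also have "\<dots> < exp r" using assms(2) unfolding thompson_TB by simp
    finally show ?thesis .
  qed
  from cInf_lessD[OF assms(1) this] show ?thesis unfolding TB_def by auto
qed

lemma thompson_le:
  assumes "TB p q \<noteq> {}" "thompson C p q \<le> r" "\<eta> > 0"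
  shows "\<exists>\<beta>. 1 \<le> \<beta> \<and> \<beta> < exp r + \<eta> \<and> le ((1/\<beta>) *\<^sub>R p) q \<and> le q (\<beta> *\<^sub>R p)"
proof -
  obtain b where b: "b \<in> TB p q" using assms(1) by auto
  have i1: "1 \<le> Inf (TB p q)" using TB_ne_bounds[OF b] by simp
  have "Inf (TB p q) \<le> exp r"
  proof -
    have "Inf (TB p q) = exp (ln (Inf (TB p q)))" using i1 by simp
    also have "\<dots> \<le> exp r" using assms(2) unfolding thompson_TB by simp
    finally show ?thesis .
  qed
  hence "Inf (TB p q) < exp r + \<eta>" using assms(3) by simp
  from cInf_lessD[OF assms(1) this] show ?thesis unfolding TB_def by auto
qed

lemma thompson_mem_lt:
  assumes "\<beta> \<in> TB p q" "\<beta> < exp r"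
  shows "thompson C p q < r"
proof -
  have "1 \<le> Inf (TB p q)" "Inf (TB p q) < exp r" using TB_ne_bounds[OF assms(1)] assms(2) by auto
  hence "ln (Inf (TB p q)) < ln (exp r)" by (subst ln_less_cancel_iff) auto
  thus ?thesis unfolding thompson_TB by simp
qed

lemma thompson_mem_le:
  assumes "\<beta> \<in> TB p q"
  shows "thompson C p q \<le> ln \<beta>"
proof -
  have "1 \<le> Inf (TB p q)" "Inf (TB p q) \<le> \<beta>" using TB_ne_bounds[OF assms(1)] by auto
  thus ?thesis unfolding thompson_TB by simp
qed

lemma thompson_self: assumes "p \<in> C" shows "thompson C p p = 0"
proof -
  have "TB p p = {1..}"
  proof (intro set_eqI iffI)
    fix b assume "b \<in> TB p p" thus "b \<in> {1..}" by (auto simp: TB_def)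
  next
    fix b :: real assume "b \<in> {1..}"
    hence b: "b \<ge> 1" by auto
    have "le ((1/b) *\<^sub>R p) (1 *\<^sub>R p)" using b assms by (intro le_scalar) auto
    moreover have "le (1 *\<^sub>R p) (b *\<^sub>R p)" using b assms by (intro le_scalar) auto
    ultimately show "b \<in> TB p p" using b by (auto simp: TB_def)
  qed
  hence "Inf (TB p p) = 1" by (simp add: cInf_atLeast)
  thus ?thesis by (simp add: thompson_TB)
qed

end



locale mctx = cctx C for C :: "'a::banach set" +
  fixes f :: "'a \<Rightarrow> 'a" and u :: 'a and \<kappa> :: real
  assumes normal: "\<And>x y. le 0 x \<Longrightarrow> le x y \<Longrightarrow> norm x \<le> \<kappa> * norm y"
    and kpos: "\<kappa> \<ge> 0"
    and maps: "f ` interior C \<subseteq> interior C"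
    and op: "order_preserving_on C f"
    and sh: "subhomogeneous_on C f"
    and u: "u \<in> fixpoints (interior C) f"
begin

lemma u_int: "u \<in> interior C" and fu: "f u = u"
  using u by (auto simp: fixpoints_def)

lemma uC: "u \<in> C" using u_int intC by auto

lemma f_int: "x \<in> interior C \<Longrightarrow> f x \<in> interior C" using maps by auto

lemma fk_int: "x \<in> interior C \<Longrightarrow> (f ^^ k) x \<in> interior C"
  by (induction k) (auto intro: f_int)

lemma opD: "x \<in> interior C \<Longrightarrow> y \<in> interior C \<Longrightarrow> le x y \<Longrightarrow> le (f x) (f y)"
  using op unfolding order_preserving_on_def by blast

lemma shD: "x \<in> interior C \<Longrightarrow> t \<ge> 1 \<Longrightarrow> le (f (t *\<^sub>R x)) (t *\<^sub>R f x)"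
  using sh unfolding subhomogeneous_on_def by blast

lemma fk_mono: "x \<in> interior C \<Longrightarrow> y \<in> interior C \<Longrightarrow> le x y \<Longrightarrow> le ((f^^k) x) ((f^^k) y)"
  by (induction k) (auto intro: opD fk_int)

abbreviation cb where "cb R \<equiv> thompson_cball C u R"

lemma cb_int: "z \<in> cb R \<Longrightarrow> z \<in> interior C"
  unfolding thompson_cball_def using int_le int_scale[OF u_int, of "exp (-R)"] by auto

lemma lo: assumes "R \<ge> 0" shows "le (exp (-R) *\<^sub>R u) (f (exp (-R) *\<^sub>R u))"
proof -
  have i: "exp (-R) *\<^sub>R u \<in> interior C" by (intro int_scale u_int) auto
  have "le (f (exp R *\<^sub>R (exp (-R) *\<^sub>R u))) (exp R *\<^sub>R f (exp (-R) *\<^sub>R u))"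
    using shD[OF i] assms by simp
  hence "le u (exp R *\<^sub>R f (exp (-R) *\<^sub>R u))" by (simp add: exp_minus fu)
  from le_scale[OF this, of "exp (-R)"] show ?thesis by (simp add: exp_minus)
qed

lemma hi: assumes "R \<ge> 0" shows "le (f (exp R *\<^sub>R u)) (exp R *\<^sub>R u)"
  using shD[OF u_int, of "exp R"] assms by (simp add: fu)

lemma f_cb: assumes "R \<ge> 0" "z \<in> cb R" shows "f z \<in> cb R"
proof -
  have z: "z \<in> interior C" using cb_int assms(2) by blast
  have i1: "exp (-R) *\<^sub>R u \<in> interior C" "exp R *\<^sub>R u \<in> interior C" by (auto intro: int_scale u_int)
  have "le (exp (-R) *\<^sub>R u) z" "le z (exp R *\<^sub>R u)" using assms(2) by (auto simp: thompson_cball_def)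
  hence "le (f (exp (-R) *\<^sub>R u)) (f z)" "le (f z) (f (exp R *\<^sub>R u))" using opD i1 z by auto
  thus ?thesis using lo[OF assms(1)] hi[OF assms(1)] le_trans unfolding thompson_cball_def by blast
qed

lemma fk_cb: "R \<ge> 0 \<Longrightarrow> z \<in> cb R \<Longrightarrow> (f^^k) z \<in> cb R"
  by (induction k) (auto intro: f_cb)

lemma u_cb: "R \<ge> 0 \<Longrightarrow> exp (-R) *\<^sub>R u \<in> cb R" "R \<ge> 0 \<Longrightarrow> exp R *\<^sub>R u \<in> cb R"
  unfolding thompson_cball_def using uC by (auto intro!: le_scalar le_refl)

lemma cb_bounded: "bounded (cb R)"
proof -
  have "\<forall>z\<in>cb R. norm z \<le> \<kappa> * norm ((exp R - exp (-R)) *\<^sub>R u) + norm (exp (-R) *\<^sub>R u)"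
  proof
    fix z assume z: "z \<in> cb R"
    have "le 0 (z - exp (-R) *\<^sub>R u)" using z by (simp add: thompson_cball_def cone_le_def)
    moreover have "le (z - exp (-R) *\<^sub>R u) ((exp R - exp (-R)) *\<^sub>R u)"
      using z by (simp add: thompson_cball_def cone_le_def algebra_simps)
    ultimately have "norm (z - exp (-R) *\<^sub>R u) \<le> \<kappa> * norm ((exp R - exp (-R)) *\<^sub>R u)"
      by (rule normal)
    thus "norm z \<le> \<kappa> * norm ((exp R - exp (-R)) *\<^sub>R u) + norm (exp (-R) *\<^sub>R u)"
      using norm_triangle_sub[of z "exp (-R) *\<^sub>R u"] by (smt (verit) norm_minus_commute norm_triangle_ineq4)
  qed
  thus ?thesis unfolding bounded_iff by blast
qed

lemma TB_cb: assumes "R \<ge> 0" "p \<in> cb R" "q \<in> cb R" shows "exp (2*R) \<in> TB p q"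
proof -
  have p: "le (exp (-R) *\<^sub>R u) p" "le p (exp R *\<^sub>R u)" and q: "le (exp (-R) *\<^sub>R u) q" "le q (exp R *\<^sub>R u)"
    using assms by (auto simp: thompson_cball_def)
  have e1: "exp (-2*R) * exp R = exp (-R)" "exp (2*R) * exp (-R) = exp R" by (simp_all add: mult_exp_exp)
  have "le (exp (-2*R) *\<^sub>R p) (exp (-R) *\<^sub>R u)" using le_scale[OF p(2), of "exp (-2*R)"] e1 by simp
  hence "le (exp (-2*R) *\<^sub>R p) q" using q(1) le_trans by blast
  moreover have "1 / exp (2*R) = exp (-2*R)" by (simp add: exp_minus divide_inverse)
  ultimately have 1: "le ((1 / exp (2*R)) *\<^sub>R p) q" by simp
  have "le (exp R *\<^sub>R u) (exp (2*R) *\<^sub>R p)" using le_scale[OF p(1), of "exp (2*R)"] e1 by simp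
  hence 2: "le q (exp (2*R) *\<^sub>R p)" using q(2) le_trans by blast
  show ?thesis using 1 2 assms(1) unfolding TB_def by auto
qed

lemma thompson_cb: "R \<ge> 0 \<Longrightarrow> p \<in> cb R \<Longrightarrow> q \<in> cb R \<Longrightarrow> thompson C p q \<le> 2*R"
  using thompson_mem_le[OF TB_cb] by simp

end


context mctx begin

lemma ev01: "eventually (\<lambda>\<epsilon>::real. 0 < \<epsilon> \<and> \<epsilon> < 1) (at_right 0)"
  unfolding eventually_at_right_field by (intro exI[of _ 1]) auto

lemma orbit_fix:
  assumes z0: "z0 \<in> interior C" and lim: "(\<lambda>k. (f^^k) z0) \<longlonglongrightarrow> z" and zi: "z \<in> interior C"
  shows "f z = z"
proof -
  define s where "s k = (f^^k) z0" for k
  have sS: "s (Suc k) = f (s k)" for k by (simp add: s_def)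
  have si: "s k \<in> interior C" for k using fk_int[OF z0] by (simp add: s_def)
  have "s = (\<lambda>k. (f^^k) z0)" by (simp add: s_def fun_eq_iff)
  hence lim': "s \<longlonglongrightarrow> z" using lim by simp
  have limS: "(\<lambda>k. s (Suc k)) \<longlonglongrightarrow> z" using LIMSEQ_Suc[OF lim'] .
  have A: "le z ((1+\<epsilon>) *\<^sub>R f z) \<and> le (f z) ((1/(1-\<epsilon>)) *\<^sub>R z)" if e: "0 < \<epsilon>" "\<epsilon> < 1" for \<epsilon>
  proof -
    obtain \<rho> where \<rho>: "\<rho> > 0" "\<forall>w. norm (w - z) < \<rho> \<longrightarrow> le ((1 - \<epsilon>) *\<^sub>R z) w \<and> le w ((1 + \<epsilon>) *\<^sub>R z)"
      using int_approx[OF zi e(1)] by blast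
    have "eventually (\<lambda>k. dist (s k) z < \<rho>) sequentially" using tendsto_iff[THEN iffD1, OF lim', rule_format, OF \<rho>(1)] .
    hence ev: "eventually (\<lambda>k. le ((1 - \<epsilon>) *\<^sub>R z) (s k) \<and> le (s k) ((1 + \<epsilon>) *\<^sub>R z)) sequentially"
      by (rule eventually_mono) (use \<rho>(2) in \<open>simp add: dist_norm\<close>)
    have zi1: "(1+\<epsilon>) *\<^sub>R z \<in> interior C" using int_scale[OF zi] e by simp
    have ev1: "eventually (\<lambda>k. le (s (Suc k)) ((1+\<epsilon>) *\<^sub>R f z)) sequentially"
    proof (rule eventually_mono[OF ev])
      fix k assume "le ((1 - \<epsilon>) *\<^sub>R z) (s k) \<and> le (s k) ((1 + \<epsilon>) *\<^sub>R z)"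
      hence "le (f (s k)) (f ((1+\<epsilon>) *\<^sub>R z))" using opD[OF si zi1] by blast
      moreover have "le (f ((1+\<epsilon>) *\<^sub>R z)) ((1+\<epsilon>) *\<^sub>R f z)" using shD[OF zi] e by simp
      ultimately show "le (s (Suc k)) ((1+\<epsilon>) *\<^sub>R f z)" unfolding sS by (rule le_trans)
    qed
    have 1: "le z ((1+\<epsilon>) *\<^sub>R f z)"
      by (rule le_closed[OF limS tendsto_const ev1]) simp
    define t where "t = 1/(1-\<epsilon>)"
    have t: "t \<ge> 1" "t > 0" using e unfolding t_def by (auto simp: field_simps)
    have ev2: "eventually (\<lambda>k. le (f z) (t *\<^sub>R s (Suc k))) sequentially"
    proof (rule eventually_mono[OF ev])
      fix k assume "le ((1 - \<epsilon>) *\<^sub>R z) (s k) \<and> le (s k) ((1 + \<epsilon>) *\<^sub>R z)"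
      hence "le (t *\<^sub>R ((1 - \<epsilon>) *\<^sub>R z)) (t *\<^sub>R s k)" using le_scale[of _ _ t] t(2) by (simp del: scaleR_scaleR)
      moreover have "t *\<^sub>R ((1 - \<epsilon>) *\<^sub>R z) = z" using e unfolding t_def by simp
      ultimately have "le z (t *\<^sub>R s k)" by simp
      hence "le (f z) (f (t *\<^sub>R s k))" using opD[OF zi int_scale[OF si t(2)]] by blast
      moreover have "le (f (t *\<^sub>R s k)) (t *\<^sub>R f (s k))" using shD[OF si t(1)] .
      ultimately show "le (f z) (t *\<^sub>R s (Suc k))" unfolding sS by (rule le_trans)
    qed
    have 2: "le (f z) (t *\<^sub>R z)"
      by (rule le_closed[OF tendsto_const tendsto_scaleR[OF tendsto_const limS] ev2]) simp
    show ?thesis using 1 2 unfolding t_def by simp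
  qed
  have "le z (f z)"
  proof (rule le_closed[where F="at_right (0::real)" and s="\<lambda>_. z" and t="\<lambda>\<epsilon>. (1+\<epsilon>) *\<^sub>R f z"])
    show "((\<lambda>\<epsilon>. (1+\<epsilon>) *\<^sub>R f z) \<longlongrightarrow> f z) (at_right 0)"
      using tendsto_scaleR[OF tendsto_add[OF tendsto_const[of 1] tendsto_ident_at[of 0 "{0<..}"]] tendsto_const[of "f z"]]
      by (simp add: at_right_eq)
    show "eventually (\<lambda>\<epsilon>. le z ((1+\<epsilon>) *\<^sub>R f z)) (at_right 0)"
      by (rule eventually_mono[OF ev01]) (use A in blast)
  qed auto
  moreover have "le (f z) z"
  proof (rule le_closed[where F="at_right (0::real)" and s="\<lambda>_. f z" and t="\<lambda>\<epsilon>. (1/(1-\<epsilon>)) *\<^sub>R z"])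
    show "((\<lambda>\<epsilon>. (1/(1-\<epsilon>)) *\<^sub>R z) \<longlongrightarrow> z) (at_right 0)"
      using tendsto_scaleR[OF tendsto_divide[OF tendsto_const[of 1] tendsto_diff[OF tendsto_const[of 1] tendsto_ident_at[of 0 "{0<..}"]]] tendsto_const[of z]]
      by (simp add: at_right_eq)
    show "eventually (\<lambda>\<epsilon>. le (f z) ((1/(1-\<epsilon>)) *\<^sub>R z)) (at_right 0)"
      by (rule eventually_mono[OF ev01]) (use A in blast)
  qed auto
  ultimately show ?thesis using le_antisym by blast
qed

end


lemma kur_shift:
  fixes s :: "nat \<Rightarrow> 'b"
  assumes d0: "d (s 0) (s 0) \<le> 0"
    and ne: "\<exists>\<delta> F. \<delta> \<ge> 0 \<and> finite F \<and> \<Union>F = range (\<lambda>k. s (Suc k)) \<and> (\<forall>A\<in>F. \<forall>x\<in>A. \<forall>y\<in>A. d x y \<le> \<delta>)"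
  shows "kuratowski d (range s) \<le> kuratowski d (range (\<lambda>k. s (Suc k)))"
proof -
  define D where "D S = {\<delta>. \<delta> \<ge> 0 \<and> (\<exists>F. finite F \<and> \<Union>F = S \<and> (\<forall>A\<in>F. \<forall>x\<in>A. \<forall>y\<in>A. d x y \<le> \<delta>))}" for S
  have rs: "range s = insert (s 0) (range (\<lambda>k. s (Suc k)))"
  proof -
    have "s ` insert 0 (range Suc) = insert (s 0) (range (\<lambda>k. s (Suc k)))" by (simp add: image_image)
    thus ?thesis by (simp only: UNIV_nat_eq[symmetric])
  qed
  have sub: "D (range (\<lambda>k. s (Suc k))) \<subseteq> D (range s)"
  proof
    fix \<delta> assume "\<delta> \<in> D (range (\<lambda>k. s (Suc k)))"
    then obtain F where F: "\<delta> \<ge> 0" "finite F" "\<Union>F = range (\<lambda>k. s (Suc k))" "\<forall>A\<in>F. \<forall>x\<in>A. \<forall>y\<in>A. d x y \<le> \<delta>"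
      unfolding D_def by blast
    have "finite (insert {s 0} F)" "\<Union>(insert {s 0} F) = range s"
      "\<forall>A\<in>insert {s 0} F. \<forall>x\<in>A. \<forall>y\<in>A. d x y \<le> \<delta>"
      using F d0 rs by auto
    thus "\<delta> \<in> D (range s)" unfolding D_def using F(1) by blast
  qed
  have "D (range (\<lambda>k. s (Suc k))) \<noteq> {}" using ne unfolding D_def by blast
  moreover have "bdd_below (D (range s))" unfolding D_def by (rule bdd_belowI[of _ 0]) auto
  ultimately have "Inf (D (range s)) \<le> Inf (D (range (\<lambda>k. s (Suc k))))"
    using sub by (rule cInf_superset_mono)
  thus ?thesis unfolding kuratowski_def D_def .
qed

lemma kur_clusters:
  fixes s :: "nat \<Rightarrow> 'b"
  assumes k0: "kuratowski d (range s) \<le> 0"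
    and ne: "\<exists>\<delta> F. \<delta> \<ge> 0 \<and> finite F \<and> \<Union>F = range s \<and> (\<forall>A\<in>F. \<forall>x\<in>A. \<forall>y\<in>A. d x y \<le> \<delta>)"
    and e: "\<epsilon> > 0"
  shows "\<exists>I. infinite I \<and> (\<forall>j\<in>I. \<forall>l\<in>I. d (s j) (s l) \<le> \<epsilon>)"
proof -
  define D where "D = {\<delta>. \<delta> \<ge> 0 \<and> (\<exists>F. finite F \<and> \<Union>F = range s \<and> (\<forall>A\<in>F. \<forall>x\<in>A. \<forall>y\<in>A. d x y \<le> \<delta>))}"
  have "D \<noteq> {}" using ne unfolding D_def by blast
  moreover have "Inf D < \<epsilon>" using k0 e unfolding kuratowski_def D_def by simp
  ultimately obtain \<delta> where "\<delta> \<in> D" "\<delta> < \<epsilon>" using cInf_lessD by blast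
  then obtain F where F: "finite F" "\<Union>F = range s" "\<forall>A\<in>F. \<forall>x\<in>A. \<forall>y\<in>A. d x y \<le> \<delta>"
    unfolding D_def by blast
  have U: "UNIV = (\<Union>A\<in>F. {k. s k \<in> A})" using F(2) by auto
  have "\<exists>A\<in>F. infinite {k. s k \<in> A}"
  proof (rule ccontr)
    assume "\<not> ?thesis"
    hence fin: "finite (\<Union>A\<in>F. {k. s k \<in> A})" using F(1) by auto
    have "finite (UNIV::nat set)" using fin U by simp
    thus False using infinite_UNIV_nat by contradiction
  qed
  then obtain A where A: "A \<in> F" "infinite {k. s k \<in> A}" by blast
  show ?thesis
  proof (intro exI[of _ "{k. s k \<in> A}"] conjI ballI)
    show "infinite {k. s k \<in> A}" using A(2) .
    fix j l assume "j \<in> {k. s k \<in> A}" "l \<in> {k. s k \<in> A}"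
    hence "d (s j) (s l) \<le> \<delta>" using F(3) A(1) by blast
    thus "d (s j) (s l) \<le> \<epsilon>" using \<open>\<delta> < \<epsilon>\<close> by linarith
  qed
qed

context mctx begin

lemma conv_inc:
  assumes mono: "\<And>j l. j \<le> l \<Longrightarrow> le (s j) (s l)"
    and clus: "\<And>\<epsilon>. \<epsilon> > 0 \<Longrightarrow> \<exists>I. infinite I \<and> (\<forall>j\<in>I. \<forall>l\<in>I. j \<le> l \<longrightarrow> norm (s l - s j) \<le> \<epsilon>)"
  shows "convergent s"
proof -
  have "Cauchy s"
  proof (rule CauchyI)
    fix e :: real assume e: "e > 0"
    define \<epsilon> where "\<epsilon> = e / (2 * (\<kappa> + 1))"
    have \<epsilon>: "\<epsilon> > 0" using e kpos unfolding \<epsilon>_def by simp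
    obtain I where I: "infinite I" "\<forall>j\<in>I. \<forall>l\<in>I. j \<le> l \<longrightarrow> norm (s l - s j) \<le> \<epsilon>"
      using clus[OF \<epsilon>] by blast
    obtain j0 where j0: "j0 \<in> I" using infinite_imp_nonempty[OF I(1)] by blast
    have B: "norm (s m - s j0) \<le> \<kappa> * \<epsilon>" if m: "m \<ge> j0" for m
    proof -
      obtain l where l: "l \<ge> m" "l \<in> I" using I(1) infinite_nat_iff_unbounded_le by blast
      have "le 0 (s m - s j0)" using mono[OF m] by (simp add: cone_le_def)
      moreover have "le (s m - s j0) (s l - s j0)" using mono[OF l(1)] by (simp add: cone_le_def)
      ultimately have "norm (s m - s j0) \<le> \<kappa> * norm (s l - s j0)" by (rule normal)
      also have "\<dots> \<le> \<kappa> * \<epsilon>" using I(2) j0 l m kpos by (intro mult_left_mono) auto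
      finally show ?thesis .
    qed
    have "\<forall>m\<ge>j0. \<forall>n\<ge>j0. norm (s m - s n) < e"
    proof (intro allI impI)
      fix m n assume "m \<ge> j0" "n \<ge> j0"
      have "s m - s n = (s m - s j0) - (s n - s j0)" by simp
      hence "norm (s m - s n) \<le> norm (s m - s j0) + norm (s n - s j0)"
        using norm_triangle_ineq4[of "s m - s j0" "s n - s j0"] by simp
      also have "\<dots> \<le> 2 * (\<kappa> * \<epsilon>)" using B[OF \<open>m \<ge> j0\<close>] B[OF \<open>n \<ge> j0\<close>] by linarith
      also have "\<dots> < e" using e kpos unfolding \<epsilon>_def by (simp add: field_simps)
      finally show "norm (s m - s n) < e" .
    qed
    thus "\<exists>M. \<forall>m\<ge>M. \<forall>n\<ge>M. norm (s m - s n) < e" by blast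
  qed
  thus ?thesis by (rule Cauchy_convergent)
qed

lemma conv_mono:
  assumes mono: "(\<forall>j l. j \<le> l \<longrightarrow> le (s j) (s l)) \<or> (\<forall>j l. j \<le> l \<longrightarrow> le (s l) (s j))"
    and clus: "\<And>\<epsilon>. \<epsilon> > 0 \<Longrightarrow> \<exists>I. infinite I \<and> (\<forall>j\<in>I. \<forall>l\<in>I. j \<le> l \<longrightarrow> norm (s l - s j) \<le> \<epsilon>)"
  shows "convergent s"
  using mono
proof
  assume "\<forall>j l. j \<le> l \<longrightarrow> le (s j) (s l)"
  thus ?thesis using conv_inc clus by blast
next
  assume m: "\<forall>j l. j \<le> l \<longrightarrow> le (s l) (s j)"
  have "convergent (\<lambda>k. - s k)"
  proof (rule conv_inc)
    fix j l :: nat assume "j \<le> l" thus "le (- s j) (- s l)" using m by (simp add: cone_le_def)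
  next
    fix \<epsilon> :: real assume "\<epsilon> > 0"
    from clus[OF this] show "\<exists>I. infinite I \<and> (\<forall>j\<in>I. \<forall>l\<in>I. j \<le> l \<longrightarrow> norm (- s l - - s j) \<le> \<epsilon>)"
      by (simp add: norm_minus_commute)
  qed
  thus ?thesis using convergent_minus_iff by blast
qed

end


lemma small_delta:
  assumes "c > (0::real)"
  shows "\<exists>\<delta>>0. exp \<delta> + \<delta> - 1 < c \<and> exp \<delta> - exp (-\<delta>) < c"
proof -
  have t1: "((\<lambda>\<delta>. exp \<delta> + \<delta> - 1) \<longlongrightarrow> exp 0 + 0 - 1) (at_right (0::real))"
    by (intro tendsto_intros)
  have t2: "((\<lambda>\<delta>. exp \<delta> - exp (-\<delta>)) \<longlongrightarrow> exp 0 - exp (-0)) (at_right (0::real))"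
    by (intro tendsto_intros)
  have e1: "eventually (\<lambda>\<delta>. exp \<delta> + \<delta> - 1 < c) (at_right 0)"
    using order_tendstoD(2)[OF t1] assms by simp
  have e2: "eventually (\<lambda>\<delta>. exp \<delta> - exp (-\<delta>) < c) (at_right 0)"
    using order_tendstoD(2)[OF t2] assms by simp
  have e3: "eventually (\<lambda>\<delta>::real. \<delta> > 0) (at_right 0)"
    unfolding eventually_at_right_field by (intro exI[of _ 1]) auto
  from eventually_happens'[OF trivial_limit_at_right_real eventually_conj[OF e3 eventually_conj[OF e1 e2]]]
  show ?thesis by blast
qed

context mctx begin

lemma normdiff:
  assumes R: "R \<ge> 0" and ab: "a \<in> cb R" "b \<in> cb R" "le a b" and \<beta>: "\<beta> \<ge> 1"
    and h: "le b (\<beta> *\<^sub>R a) \<or> le ((1/\<beta>) *\<^sub>R b) a"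
  shows "norm (b - a) \<le> \<kappa> * ((\<beta> - 1) * (exp R * norm u))"
proof -
  have aC: "a \<in> C" "b \<in> C" using ab cb_int intC by blast+
  have au: "le a (exp R *\<^sub>R u)" "le b (exp R *\<^sub>R u)" using ab by (auto simp: thompson_cball_def)
  have b0: "\<beta> - 1 \<ge> 0" using \<beta> by simp
  have "le (b - a) ((\<beta> - 1) *\<^sub>R (exp R *\<^sub>R u))"
    using h
  proof
    assume h1: "le b (\<beta> *\<^sub>R a)"
    have "le (b - a) ((\<beta> - 1) *\<^sub>R a)" using h1 by (simp add: cone_le_def algebra_simps)
    moreover have "le ((\<beta> - 1) *\<^sub>R a) ((\<beta> - 1) *\<^sub>R (exp R *\<^sub>R u))" using le_scale[OF au(1) b0] .
    ultimately show ?thesis by (rule le_trans)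
  next
    assume h2: "le ((1/\<beta>) *\<^sub>R b) a"
    have "le (b - a) ((1 - 1/\<beta>) *\<^sub>R b)" using h2 by (simp add: cone_le_def algebra_simps)
    moreover have "le ((1 - 1/\<beta>) *\<^sub>R b) ((\<beta> - 1) *\<^sub>R b)"
    proof (rule le_scalar[OF aC(2)])
      have "1/\<beta> \<le> 1" using \<beta> by simp
      moreover have "1 - 1/\<beta> \<le> \<beta> - 1 \<longleftrightarrow> 2 \<le> \<beta> + 1/\<beta>" by linarith
      moreover have "2 \<le> \<beta> + 1/\<beta>"
      proof -
        have "(\<beta> - 1)^2 \<ge> 0" by simp
        hence "2 * \<beta> \<le> \<beta> * \<beta> + 1" by (simp add: power2_eq_square algebra_simps)
        thus ?thesis using \<beta> by (simp add: field_simps)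
      qed
      ultimately show "1 - 1/\<beta> \<le> \<beta> - 1" by simp
    qed
    moreover have "le ((\<beta> - 1) *\<^sub>R b) ((\<beta> - 1) *\<^sub>R (exp R *\<^sub>R u))" using le_scale[OF au(2) b0] .
    ultimately show ?thesis using le_trans by blast
  qed
  moreover have "le 0 (b - a)" using ab(3) by (simp add: cone_le_def)
  ultimately have "norm (b - a) \<le> \<kappa> * norm ((\<beta> - 1) *\<^sub>R (exp R *\<^sub>R u))" using normal by blast
  also have "norm ((\<beta> - 1) *\<^sub>R (exp R *\<^sub>R u)) = (\<beta> - 1) * (exp R * norm u)" using b0 by simp
  finally show ?thesis .
qed

lemma orbit_conv:
  assumes R: "R \<ge> 0" and scb: "\<And>k. s k \<in> cb R" and sS: "\<And>k. s (Suc k) = f (s k)"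
    and mono: "(\<forall>j l. j \<le> l \<longrightarrow> le (s j) (s l)) \<or> (\<forall>j l. j \<le> l \<longrightarrow> le (s l) (s j))"
    and cond: "regular_cone C \<or> gamma_condensing C f \<or> tau_condensing C f"
  shows "convergent s"
proof -
  have si: "s k \<in> interior C" for k using scb cb_int by blast
  have fS: "f ` range s = range (\<lambda>k. s (Suc k))" using sS by (auto simp: image_iff)
  have rsub: "range (\<lambda>k. s (Suc k)) \<subseteq> range s" by auto
  show ?thesis using cond
  proof (elim disjE)
    assume reg: "regular_cone C"
    show ?thesis using mono
    proof
      assume inc: "\<forall>j l. j \<le> l \<longrightarrow> le (s j) (s l)"
      define w where "w k = exp R *\<^sub>R u - s k" for k
      have "convergent w" using reg unfolding regular_cone_def
      proof (rule allE, elim impE)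
        show "(\<forall>n. w n \<in> C) \<and> (\<forall>n. le (w (Suc n)) (w n))"
          using scb inc unfolding w_def by (auto simp: thompson_cball_def cone_le_def)
      qed
      then obtain L where "w \<longlonglongrightarrow> L" by (auto simp: convergent_def)
      hence "(\<lambda>k. exp R *\<^sub>R u - w k) \<longlonglongrightarrow> exp R *\<^sub>R u - L" by (intro tendsto_intros)
      thus ?thesis unfolding w_def convergent_def by auto
    next
      assume dec: "\<forall>j l. j \<le> l \<longrightarrow> le (s l) (s j)"
      show ?thesis using reg unfolding regular_cone_def
      proof (rule allE, elim impE)
        show "(\<forall>n. s n \<in> C) \<and> (\<forall>n. le (s (Suc n)) (s n))"
          using si intC dec by auto
      qed
    qed
  next
    assume g: "gamma_condensing C f"
    have "range s \<subseteq> cb R" using scb by auto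
    hence bS: "bounded (range s)" by (rule bounded_subset[OF cb_bounded])
    have cover: "\<exists>\<delta> F. \<delta> \<ge> 0 \<and> finite F \<and> \<Union>F = S \<and> (\<forall>A\<in>F. \<forall>x\<in>A. \<forall>y\<in>A. dist x y \<le> \<delta>)"
      if bSS: "bounded S" for S :: "'a set"
    proof -
      obtain b where b: "b > 0" "\<forall>x\<in>S. norm x \<le> b" using bounded_pos[THEN iffD1, OF bSS] by blast
      have "\<forall>x\<in>S. \<forall>y\<in>S. dist x y \<le> 2 * b"
      proof (intro ballI)
        fix x y assume "x \<in> S" "y \<in> S"
        hence "norm x \<le> b" "norm y \<le> b" using b by auto
        thus "dist x y \<le> 2 * b" using norm_triangle_ineq4[of x y] by (simp add: dist_norm)
      qed
      thus ?thesis using b by (intro exI[of _ "2*b"] exI[of _ "{S}"]) auto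
    qed
    have ks: "kuratowski dist (range s) \<le> kuratowski dist (range (\<lambda>k. s (Suc k)))"
      by (rule kur_shift) (simp, rule cover[OF bounded_subset[OF bS rsub]])
    have sub: "range s \<subseteq> interior C" using si by auto
    have "\<forall>S. S \<subseteq> interior C \<and> bounded S \<and> kuratowski dist S > 0 \<longrightarrow>
        kuratowski dist (f ` S) < kuratowski dist S" using g unfolding gamma_condensing_def by blast
    hence "kuratowski dist (range s) > 0 \<longrightarrow> kuratowski dist (f ` range s) < kuratowski dist (range s)"
      using sub bS by blast
    hence k0: "kuratowski dist (range s) \<le> 0" using ks unfolding fS by linarith
    show ?thesis
    proof (rule conv_mono[OF mono])
      fix \<epsilon> :: real assume "\<epsilon> > 0"
      from kur_clusters[OF k0 cover[OF bS] this] obtain I where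
        I: "infinite I" "\<forall>j\<in>I. \<forall>l\<in>I. dist (s j) (s l) \<le> \<epsilon>" by blast
      have "norm (s l - s j) \<le> \<epsilon>" if "j \<in> I" "l \<in> I" for j l
        using I(2) that dist_norm[of "s l" "s j"] by (metis dist_commute)
      thus "\<exists>I. infinite I \<and> (\<forall>j\<in>I. \<forall>l\<in>I. j \<le> l \<longrightarrow> norm (s l - s j) \<le> \<epsilon>)"
        using I(1) by blast
    qed
  next
    assume t: "tau_condensing C f"
    have tb: "thompson C x y \<le> 2*R" if "x \<in> range s" "y \<in> range s" for x y
      using thompson_cb[OF R] scb that by blast
    have tbS: "thompson_bounded C (range s)" unfolding thompson_bounded_def using si tb by blast
    have cover: "\<exists>\<delta> F. \<delta> \<ge> 0 \<and> finite F \<and> \<Union>F = S \<and> (\<forall>A\<in>F. \<forall>x\<in>A. \<forall>y\<in>A. thompson C x y \<le> \<delta>)"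
      if "S \<subseteq> range s" for S
      using R tb that by (intro exI[of _ "2*R"] exI[of _ "{S}"]) (auto simp del: UNIV_I, blast)
    have "s 0 \<in> C" using si intC by blast
    hence ks: "kuratowski (thompson C) (range s) \<le> kuratowski (thompson C) (range (\<lambda>k. s (Suc k)))"
      by (intro kur_shift) (simp add: thompson_self, rule cover[OF rsub])
    have "\<forall>S. thompson_bounded C S \<and> kuratowski (thompson C) S > 0 \<longrightarrow>
        kuratowski (thompson C) (f ` S) < kuratowski (thompson C) S" using t unfolding tau_condensing_def by blast
    hence "kuratowski (thompson C) (range s) > 0 \<longrightarrow> kuratowski (thompson C) (f ` range s) < kuratowski (thompson C) (range s)"
      using tbS by blast
    hence k0: "kuratowski (thompson C) (range s) \<le> 0" using ks unfolding fS by linarith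
    show ?thesis
    proof (rule conv_mono[OF mono])
      fix \<epsilon> :: real assume e: "\<epsilon> > 0"
      define K where "K = \<kappa> * (exp R * norm u) + 1"
      have "0 \<le> \<kappa> * (exp R * norm u)" using kpos by simp
      hence K: "K > 0" "\<kappa> * (exp R * norm u) \<le> K" unfolding K_def by linarith+
      obtain \<delta> where \<delta>: "\<delta> > 0" "exp \<delta> + \<delta> - 1 < \<epsilon> / K" using small_delta[of "\<epsilon>/K"] e K by auto
      from kur_clusters[OF k0 cover[OF order_refl] \<delta>(1)] obtain I where
        I: "infinite I" "\<forall>j\<in>I. \<forall>l\<in>I. thompson C (s j) (s l) \<le> \<delta>" by blast
      have "norm (s l - s j) \<le> \<epsilon>" if jl: "j \<in> I" "l \<in> I" "j \<le> l" for j l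
      proof -
        obtain \<beta> where \<beta>: "1 \<le> \<beta>" "\<beta> < exp \<delta> + \<delta>" "le ((1/\<beta>) *\<^sub>R s j) (s l)" "le (s l) (\<beta> *\<^sub>R s j)"
          using thompson_le[OF _ _ \<delta>(1), of "s j" "s l"] TB_cb[OF R scb scb] I(2) jl by blast
        have nb: "norm (s l - s j) \<le> \<kappa> * ((\<beta> - 1) * (exp R * norm u))"
          using mono
        proof
          assume "\<forall>j l. j \<le> l \<longrightarrow> le (s j) (s l)"
          thus ?thesis using normdiff[OF R scb scb _ \<beta>(1)] \<beta>(4) jl(3) by blast
        next
          assume "\<forall>j l. j \<le> l \<longrightarrow> le (s l) (s j)"
          hence "norm (s j - s l) \<le> \<kappa> * ((\<beta> - 1) * (exp R * norm u))"
            using normdiff[OF R scb scb _ \<beta>(1)] \<beta>(3) jl(3) by blast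
          thus ?thesis by (simp add: norm_minus_commute)
        qed
        have "\<kappa> * ((\<beta> - 1) * (exp R * norm u)) = (\<beta> - 1) * (\<kappa> * (exp R * norm u))" by simp
        also have "\<dots> \<le> (\<beta> - 1) * K" using K \<beta>(1) by (intro mult_left_mono) auto
        also have "\<dots> \<le> (\<epsilon> / K) * K" using \<beta> \<delta> K by (intro mult_right_mono) auto
        also have "\<dots> = \<epsilon>" using K by simp
        finally show ?thesis using nb by simp
      qed
      thus "\<exists>I. infinite I \<and> (\<forall>j\<in>I. \<forall>l\<in>I. j \<le> l \<longrightarrow> norm (s l - s j) \<le> \<epsilon>)"
        using I(1) by blast
    qed
  qed
qed

end


context mctx begin

lemma orbit_seq:
  assumes R: "R \<ge> 0"
  shows "\<And>k. (f^^k) (exp (-R) *\<^sub>R u) \<in> cb R" "\<And>k. (f^^k) (exp R *\<^sub>R u) \<in> cb R"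
    and "\<And>j l. j \<le> l \<Longrightarrow> le ((f^^j) (exp (-R) *\<^sub>R u)) ((f^^l) (exp (-R) *\<^sub>R u))"
    and "\<And>j l. j \<le> l \<Longrightarrow> le ((f^^l) (exp R *\<^sub>R u)) ((f^^j) (exp R *\<^sub>R u))"
proof -
  define a where "a = exp (-R) *\<^sub>R u"
  define b where "b = exp R *\<^sub>R u"
  have ai: "a \<in> interior C" "b \<in> interior C" unfolding a_def b_def by (auto intro: int_scale u_int)
  show "(f^^k) (exp (-R) *\<^sub>R u) \<in> cb R" for k using fk_cb[OF R u_cb(1)[OF R]] .
  show "(f^^k) (exp R *\<^sub>R u) \<in> cb R" for k using fk_cb[OF R u_cb(2)[OF R]] .
  have sa: "le ((f^^k) a) ((f^^(Suc k)) a)" for k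
    using fk_mono[OF ai(1) f_int[OF ai(1)] lo[OF R, folded a_def], of k] by (simp add: a_def funpow_swap1)
  have sb: "le ((f^^(Suc k)) b) ((f^^k) b)" for k
    using fk_mono[OF f_int[OF ai(2)] ai(2) hi[OF R, folded b_def], of k] by (simp add: b_def funpow_swap1)
  have da: "le ((f^^j) a) ((f^^(j + d)) a)" for j d
  proof (induction d)
    case 0 show ?case by (simp add: le_refl)
  next
    case (Suc d) thus ?case using sa[of "j + d"] le_trans by simp
  qed
  have db: "le ((f^^(j + d)) b) ((f^^j) b)" for j d
  proof (induction d)
    case 0 show ?case by (simp add: le_refl)
  next
    case (Suc d) thus ?case using sb[of "j + d"] le_trans by simp
  qed
  show "le ((f^^j) (exp (-R) *\<^sub>R u)) ((f^^l) (exp (-R) *\<^sub>R u))" if "j \<le> l" for j l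
    using da[of j "l - j"] that by (simp add: a_def)
  show "le ((f^^l) (exp R *\<^sub>R u)) ((f^^j) (exp R *\<^sub>R u))" if "j \<le> l" for j l
    using db[of j "l - j"] that by (simp add: b_def)
qed

lemma part1:
  assumes r: "0 < r" "r < R" and fixb: "fixpoints (interior C) f \<subseteq> thompson_ball C u r"
    and cond: "regular_cone C \<or> gamma_condensing C f \<or> tau_condensing C f"
  shows "\<exists>k. (f^^k) ` cb R \<subseteq> thompson_ball C u r"
proof -
  have R: "R \<ge> 0" using r by simp
  define a where "a = exp (-R) *\<^sub>R u"
  define b where "b = exp R *\<^sub>R u"
  define xs where "xs k = (f^^k) a" for k
  define ys where "ys k = (f^^k) b" for k
  have ai: "a \<in> interior C" "b \<in> interior C" unfolding a_def b_def by (auto intro: int_scale u_int)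
  note os = orbit_seq[OF R, folded a_def b_def, folded xs_def ys_def]
  have xS: "xs (Suc k) = f (xs k)" "ys (Suc k) = f (ys k)" for k by (simp_all add: xs_def ys_def)
  have "convergent xs" by (rule orbit_conv[where s=xs, OF R os(1) xS(1) _ cond]) (use os(3) in blast)
  then obtain xx where xx: "xs \<longlonglongrightarrow> xx" by (auto simp: convergent_def)
  have "convergent ys" by (rule orbit_conv[where s=ys, OF R os(2) xS(2) _ cond]) (use os(4) in blast)
  then obtain yy where yy: "ys \<longlonglongrightarrow> yy" by (auto simp: convergent_def)
  have "le (xs 0) xx" by (rule le_closed[OF tendsto_const xx]) (use os(3) in auto)
  hence xxi: "xx \<in> interior C" using int_le ai(1) by (simp add: xs_def)
  have "le a yy" by (rule le_closed[OF tendsto_const yy]) (use os(2) in \<open>auto simp: thompson_cball_def a_def\<close>)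
  hence yyi: "yy \<in> interior C" using int_le ai(1) by blast
  have "f xx = xx" by (rule orbit_fix[OF ai(1) _ xxi]) (use xx in \<open>simp add: xs_def[abs_def]\<close>)
  hence "xx \<in> thompson_ball C u r" using fixb xxi by (auto simp: fixpoints_def)
  hence "thompson C u xx < r" by (simp add: thompson_ball_def)
  then obtain \<beta>1 where b1: "1 \<le> \<beta>1" "\<beta>1 < exp r" "le ((1/\<beta>1) *\<^sub>R u) xx"
    using thompson_lt[OF TB_int[OF u_int xxi]] by blast
  have "f yy = yy" by (rule orbit_fix[OF ai(2) _ yyi]) (use yy in \<open>simp add: ys_def[abs_def]\<close>)
  hence "yy \<in> thompson_ball C u r" using fixb yyi by (auto simp: fixpoints_def)
  hence "thompson C u yy < r" by (simp add: thompson_ball_def)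
  then obtain \<beta>2 where b2: "1 \<le> \<beta>2" "\<beta>2 < exp r" "le yy (\<beta>2 *\<^sub>R u)"
    using thompson_lt[OF TB_int[OF u_int yyi]] by blast
  define c where "c = min (exp r / \<beta>2 - 1) (1 - \<beta>1 / exp r)"
  have c: "c > 0" unfolding c_def using b1 b2 by (auto simp: field_simps)
  define \<epsilon> where "\<epsilon> = min (1/2) (c/2)"
  have e: "0 < \<epsilon>" "\<epsilon> < 1" "\<epsilon> < c" unfolding \<epsilon>_def using c by auto
  have e1: "(1 + \<epsilon>) * \<beta>2 < exp r"
  proof -
    have "\<epsilon> < exp r / \<beta>2 - 1" using e(3) unfolding c_def by simp
    thus ?thesis using b2 by (simp add: field_simps)
  qed
  have e2: "\<beta>1 / (1 - \<epsilon>) < exp r"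
  proof -
    have "\<epsilon> < 1 - \<beta>1 / exp r" using e(3) unfolding c_def by simp
    hence "\<beta>1 < (1 - \<epsilon>) * exp r" by (simp add: field_simps)
    thus ?thesis using e by (simp add: field_simps)
  qed
  obtain \<rho>1 where \<rho>1: "\<rho>1 > 0" "\<forall>w. norm (w - xx) < \<rho>1 \<longrightarrow> le ((1 - \<epsilon>) *\<^sub>R xx) w"
    using int_approx[OF xxi e(1)] by blast
  obtain \<rho>2 where \<rho>2: "\<rho>2 > 0" "\<forall>w. norm (w - yy) < \<rho>2 \<longrightarrow> le w ((1 + \<epsilon>) *\<^sub>R yy)"
    using int_approx[OF yyi e(1)] by blast
  have "eventually (\<lambda>k. dist (xs k) xx < \<rho>1) sequentially"
    using tendsto_iff[THEN iffD1, OF xx, rule_format, OF \<rho>1(1)] .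
  moreover have "eventually (\<lambda>k. dist (ys k) yy < \<rho>2) sequentially"
    using tendsto_iff[THEN iffD1, OF yy, rule_format, OF \<rho>2(1)] .
  ultimately obtain N where N: "dist (xs N) xx < \<rho>1" "dist (ys N) yy < \<rho>2"
    using eventually_happens'[OF sequentially_bot eventually_conj] by blast
  have lowN: "le ((1 - \<epsilon>) *\<^sub>R xx) (xs N)" using \<rho>1(2) N(1) by (simp add: dist_norm)
  have upN: "le (ys N) ((1 + \<epsilon>) *\<^sub>R yy)" using \<rho>2(2) N(2) by (simp add: dist_norm)
  define \<beta> where "\<beta> = max (\<beta>1 / (1 - \<epsilon>)) ((1 + \<epsilon>) * \<beta>2)"
  have "1 \<le> (1 + \<epsilon>) * \<beta>2" using b2(1) e(1) by (smt (verit) mult_le_cancel_right1)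
  hence bb: "1 \<le> \<beta>" "\<beta> < exp r" unfolding \<beta>_def using e1 e2 by auto
  have bpos: "\<beta> > 0" using bb by simp
  show ?thesis
  proof (intro exI[of _ N] subsetI)
    fix w assume "w \<in> (f^^N) ` cb R"
    then obtain z where z: "z \<in> cb R" "w = (f^^N) z" by blast
    have zi: "z \<in> interior C" using cb_int z(1) by blast
    have wi: "w \<in> interior C" using fk_int[OF zi] z(2) by simp
    have "le a z" "le z b" using z(1) by (auto simp: thompson_cball_def a_def b_def)
    hence wx: "le (xs N) w" and wy: "le w (ys N)" using fk_mono ai zi z(2) by (auto simp: xs_def ys_def)
    have "le ((1 - \<epsilon>) *\<^sub>R ((1/\<beta>1) *\<^sub>R u)) ((1 - \<epsilon>) *\<^sub>R xx)" using le_scale[OF b1(3)] e by simp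
    hence l1: "le (((1 - \<epsilon>) / \<beta>1) *\<^sub>R u) ((1 - \<epsilon>) *\<^sub>R xx)" by simp
    have "1/\<beta> \<le> (1 - \<epsilon>) / \<beta>1"
    proof -
      have "\<beta>1 / (1 - \<epsilon>) \<le> \<beta>" unfolding \<beta>_def by simp
      thus ?thesis using b1(1) e bpos by (simp add: field_simps)
    qed
    hence l2: "le ((1/\<beta>) *\<^sub>R u) (((1 - \<epsilon>) / \<beta>1) *\<^sub>R u)" by (rule le_scalar[OF uC])
    have lo': "le ((1/\<beta>) *\<^sub>R u) w" using l2 l1 lowN wx le_trans by blast
    have "le ((1 + \<epsilon>) *\<^sub>R yy) ((1 + \<epsilon>) *\<^sub>R (\<beta>2 *\<^sub>R u))" using le_scale[OF b2(3)] e by simp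
    hence u1: "le ((1 + \<epsilon>) *\<^sub>R yy) (((1 + \<epsilon>) * \<beta>2) *\<^sub>R u)" by simp
    have u2: "le (((1 + \<epsilon>) * \<beta>2) *\<^sub>R u) (\<beta> *\<^sub>R u)" by (rule le_scalar[OF uC]) (simp add: \<beta>_def)
    have hi': "le w (\<beta> *\<^sub>R u)" using wy upN u1 u2 le_trans by blast
    have "\<beta> \<in> TB u w" using bb lo' hi' by (simp add: TB_def)
    hence "thompson C u w < r" using thompson_mem_lt bb(2) by blast
    thus "w \<in> thompson_ball C u r" using wi by (simp add: thompson_ball_def)
  qed
qed

lemma part2:
  assumes fix1: "fixpoints (interior C) f = {u}"
    and cond: "regular_cone C \<or> gamma_condensing C f \<or> tau_condensing C f"
    and x: "x \<in> interior C"
  shows "(\<lambda>k. (f^^k) x) \<longlonglongrightarrow> u"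
proof (rule LIMSEQ_I)
  fix e :: real assume e: "e > 0"
  obtain b1 where b1: "b1 \<ge> 1" "le x (b1 *\<^sub>R u)" using int_dom[OF u_int] by blast
  obtain b2 where b2: "b2 \<ge> 1" "le u (b2 *\<^sub>R x)" using int_dom[OF x] by blast
  define c where "c = e / ((\<kappa> + 1) * (norm u + 1))"
  have "(\<kappa> + 1) * (norm u + 1) > 0" using kpos by (intro mult_pos_pos) (auto intro: add_nonneg_pos)
  hence c: "c > 0" unfolding c_def using e by simp
  obtain r where r: "r > 0" "exp r - exp (-r) < c" using small_delta[OF c] by blast
  define M where "M = max b1 b2"
  have M: "M \<ge> 1" "b1 \<le> M" "b2 \<le> M" unfolding M_def using b1 by auto
  define R where "R = ln M + r + 1"
  have lnM: "ln M \<ge> 0" using M by simp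
  have Rr: "r < R" unfolding R_def using lnM by simp
  have expR: "exp R \<ge> M"
  proof -
    have "exp R = M * exp (r + 1)" unfolding R_def using M by (simp add: exp_add)
    moreover have "exp (r + 1) \<ge> 1" using r by simp
    ultimately show ?thesis using M by (smt (verit) mult_le_cancel_left1)
  qed
  have xcb: "x \<in> cb R"
  proof -
    have "le ((1/b2) *\<^sub>R u) ((1/b2) *\<^sub>R (b2 *\<^sub>R x))" using le_scale[OF b2(2), of "1/b2"] b2 by (simp del: scaleR_scaleR)
    moreover have "(1/b2) *\<^sub>R (b2 *\<^sub>R x) = x" using b2 by simp
    ultimately have l1: "le ((1/b2) *\<^sub>R u) x" by simp
    have "exp (-R) \<le> 1/b2"
    proof -
      have "b2 \<le> exp R" using M expR by simp
      thus ?thesis using b2 by (simp add: exp_minus field_simps)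
    qed
    hence "le (exp (-R) *\<^sub>R u) ((1/b2) *\<^sub>R u)" by (rule le_scalar[OF uC])
    hence "le (exp (-R) *\<^sub>R u) x" using l1 le_trans by blast
    moreover have "le (b1 *\<^sub>R u) (exp R *\<^sub>R u)" by (rule le_scalar[OF uC]) (use M expR in simp)
    hence "le x (exp R *\<^sub>R u)" using b1 le_trans by blast
    ultimately show ?thesis by (simp add: thompson_cball_def)
  qed
  have "u \<in> thompson_ball C u r" using u_int thompson_self[OF uC] r by (simp add: thompson_ball_def)
  hence fb: "fixpoints (interior C) f \<subseteq> thompson_ball C u r" using fix1 by simp
  obtain K where K: "(f^^K) ` cb R \<subseteq> thompson_ball C u r" using part1[OF r(1) Rr fb cond] by blast
  have R0: "R \<ge> 0" using Rr r by simp
  have "\<forall>n\<ge>K. norm ((f^^n) x - u) < e"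
  proof (intro allI impI)
    fix n assume n: "n \<ge> K"
    define y where "y = (f^^n) x"
    have "y = (f^^K) ((f^^(n - K)) x)" unfolding y_def using n
      by (metis funpow_add le_add_diff_inverse comp_apply)
    moreover have "(f^^(n - K)) x \<in> cb R" using fk_cb[OF R0 xcb] .
    ultimately have "y \<in> thompson_ball C u r" using K by blast
    hence yi: "y \<in> interior C" and "thompson C u y < r" by (auto simp: thompson_ball_def)
    then obtain \<beta> where \<beta>: "1 \<le> \<beta>" "\<beta> < exp r" "le ((1/\<beta>) *\<^sub>R u) y" "le y (\<beta> *\<^sub>R u)"
      using thompson_lt[OF TB_int[OF u_int yi]] by blast
    define a where "a = y - (1/\<beta>) *\<^sub>R u"
    have "le 0 a" using \<beta>(3) by (simp add: a_def cone_le_def)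
    moreover have "le a ((\<beta> - 1/\<beta>) *\<^sub>R u)" using \<beta>(4) by (simp add: a_def cone_le_def algebra_simps)
    ultimately have na: "norm a \<le> \<kappa> * norm ((\<beta> - 1/\<beta>) *\<^sub>R u)" by (rule normal)
    have "1/\<beta> \<le> 1" using \<beta>(1) by simp
    hence d0: "\<beta> - 1/\<beta> \<ge> 0" using \<beta>(1) by linarith
    have d1: "1 - 1/\<beta> \<le> \<beta> - 1/\<beta>" using \<beta>(1) by simp
    have d2: "\<beta> - 1/\<beta> < exp r - exp (-r)"
    proof -
      have "1/\<beta> > 1 / exp r" using \<beta> by (simp add: field_simps)
      hence "1/\<beta> > exp (-r)" by (simp add: exp_minus divide_inverse)
      thus ?thesis using \<beta>(2) by simp
    qed
    have "y - u = a - (1 - 1/\<beta>) *\<^sub>R u" by (simp add: a_def algebra_simps)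
    hence "norm (y - u) \<le> norm a + norm ((1 - 1/\<beta>) *\<^sub>R u)" by (metis norm_triangle_ineq4)
    also have "\<dots> \<le> \<kappa> * ((\<beta> - 1/\<beta>) * norm u) + (\<beta> - 1/\<beta>) * norm u"
    proof -
      have "norm ((1 - 1/\<beta>) *\<^sub>R u) = (1 - 1/\<beta>) * norm u" using \<beta>(1) by simp
      also have "\<dots> \<le> (\<beta> - 1/\<beta>) * norm u" using d1 by (intro mult_right_mono) auto
      finally show ?thesis using na d0 by simp
    qed
    also have "\<dots> = (\<kappa> + 1) * (\<beta> - 1/\<beta>) * norm u" by (simp add: algebra_simps add_divide_distrib)
    also have "\<dots> \<le> (\<kappa> + 1) * c * norm u"
      using d2 r kpos by (intro mult_right_mono mult_left_mono) auto
    also have "\<dots> < e"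
    proof -
      have k1: "\<kappa> + 1 \<noteq> 0" "norm u + 1 \<noteq> 0" using kpos by (auto simp: add_nonneg_pos) (smt (verit) norm_ge_zero)
      have "(\<kappa> + 1) * c = e / (norm u + 1)" unfolding c_def using k1 by simp
      hence "(\<kappa> + 1) * c * norm u = e * (norm u / (norm u + 1))" by simp
      also have "\<dots> < e * 1"
      proof (intro mult_strict_left_mono e)
        have "norm u + 1 > 0" by (smt (verit) norm_ge_zero)
        thus "norm u / (norm u + 1) < 1" by simp
      qed
      finally show ?thesis by simp
    qed
    finally show "norm ((f^^n) x - u) < e" unfolding y_def .
  qed
  thus "\<exists>no. \<forall>n\<ge>no. norm ((f^^n) x - u) < e" by blast
qed

end

theorem lemma4p3:
  fixes C :: "'a::banach set" and f :: "'a \<Rightarrow> 'a" and u :: 'a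
  assumes cone: "closed_cone C"
    and normal: "normal_cone C"
    and int_ne: "interior C \<noteq> {}"
    and maps: "f ` interior C \<subseteq> interior C"
    and op: "order_preserving_on C f"
    and sh: "subhomogeneous_on C f"
    and cond: "regular_cone C \<or> gamma_condensing C f \<or> tau_condensing C f"
    and u: "u \<in> fixpoints (interior C) f"
    and bdd: "thompson_bounded C (fixpoints (interior C) f)"
  shows "(\<forall>R r. 0 < r \<and> r < R \<and> fixpoints (interior C) f \<subseteq> thompson_ball C u r \<longrightarrow>
            (\<exists>k::nat. (f ^^ k) ` thompson_cball C u R \<subseteq> thompson_ball C u r))
       \<and> (fixpoints (interior C) f = {u} \<longrightarrow>
            (\<forall>x\<in>interior C. (\<lambda>k. (f ^^ k) x) \<longlonglongrightarrow> u))"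
proof -
  obtain \<kappa> where \<kappa>: "\<forall>x y. cone_le C 0 x \<and> cone_le C x y \<longrightarrow> norm x \<le> \<kappa> * norm y"
    using normal unfolding normal_cone_def by blast
  interpret mctx C f u "max \<kappa> 0"
  proof unfold_locales
    show "closed_cone C" by (rule cone)
    fix x y assume "cone_le C 0 x" "cone_le C x y"
    hence "norm x \<le> \<kappa> * norm y" using \<kappa> by blast
    also have "\<dots> \<le> max \<kappa> 0 * norm y" by (intro mult_right_mono) auto
    finally show "norm x \<le> max \<kappa> 0 * norm y" .
  qed (use maps op sh u in auto)
  show ?thesis using part1[OF _ _ _ cond] part2[OF _ cond] by blast
qed

end
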